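(* Let $\lambda\in(0,1)$ and let $C>0$ be a constant. Assume $1<p<\frac{1}{1-\lambda}$ and define $q$ by $\frac{1}{q}=\frac{1}{p}-(1-\lambda)$. Then there is a constant $K$ (independent of $N$ and $f$) such that for all $N\in\mathbb{N}$ and all $f\in\ell^p(\mathbb{Z})$, $$\sup_{0<\alpha\leq CN^{-1/q}\|f\|_p} \alpha^{q}\,\big|\{x\in\mathbb{Z};\ J_{\lambda,N} f(x)>\alpha\}\big| \leq K\|f\|^q_p,$$ where $J_{\lambda,N} f(x)=\sum_{r\leq N,\ r \text{ prime}}\frac{f(x-r)}{r^{\lambda}}\log r$ and $|\cdot|$ denotes cardinality.
   Context: For $f:\mathbb{Z}\to\mathbb{R}$, $\|f\|_p$ denotes the $\ell^p(\mathbb{Z})$-norm. $\log$ is the natural logarithm. *)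

theory Defs
  imports "HOL-Analysis.Analysis" "HOL-Computational_Algebra.Primes"
begin

definition in_lp :: "real \<Rightarrow> (int \<Rightarrow> real) \<Rightarrow> bool" where
  "in_lp p f \<longleftrightarrow> (\<lambda>x. \<bar>f x\<bar> powr p) summable_on UNIV"

definition lp_norm :: "real \<Rightarrow> (int \<Rightarrow> real) \<Rightarrow> real" where
  "lp_norm p f = (\<Sum>\<^sub>\<infinity>x. \<bar>f x\<bar> powr p) powr (1 / p)"

definition J_op :: "real \<Rightarrow> nat \<Rightarrow> (int \<Rightarrow> real) \<Rightarrow> int \<Rightarrow> real" where
  "J_op lam N f x = (\<Sum>r\<in>{r. prime r \<and> r \<le> N}. f (x - int r) / (real r powr lam) * ln (real r))"

end

theory Submission
  imports Defs
begin

lemma prod_primes_dvd: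
  fixes n :: nat
  assumes "finite S" "\<And>p. p \<in> S \<Longrightarrow> prime p \<and> p dvd n"
  shows "\<Prod>S dvd n"
  using assms
proof (induction S rule: finite_induct)
  case empty then show ?case by simp
next
  case (insert x F)
  have cop: "coprime x (\<Prod>F)"
  proof (rule prime_imp_coprime)
    show "prime x" using insert by auto
    show "\<not> x dvd \<Prod>F"
    proof
      assume "x dvd \<Prod>F"
      then obtain y where "y \<in> F" "x dvd y"
        using prime_dvd_prod_iff[of F x id] insert by auto
      then have "x = y" using insert primes_dvd_imp_eq[of x y] by auto
      then show False using insert \<open>y \<in> F\<close> by auto
    qed
  qed
  have "x * \<Prod>F dvd n"
    by (rule divides_mult) (use insert cop in auto)
  then show ?case using insert by simp
qed

lemma mid_dvd:
  fixes m :: nat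
  shows "\<Prod>{p. prime p \<and> m + 1 < p \<and> p \<le> 2*m+1} dvd ((2*m+1) choose m)"
proof (rule prod_primes_dvd)
  show "finite {p. prime p \<and> m + 1 < p \<and> p \<le> 2*m+1}" by auto
  fix p assume p: "p \<in> {p. prime p \<and> m + 1 < p \<and> p \<le> 2*m+1}"
  then have pr: "prime p" by auto
  have "fact m * fact (2*m+1 - m) * ((2*m+1) choose m) = (fact (2*m+1) :: nat)"
    by (rule binomial_fact_lemma) simp
  moreover have "p dvd (fact (2*m+1) :: nat)" using p by (subst prime_dvd_fact_iff[OF pr]) simp
  moreover have "2*m+1 - m = m+1" by simp
  ultimately have "p dvd fact m * fact (m+1) * ((2*m+1) choose m)"
    by simp
  moreover have "\<not> p dvd (fact m :: nat)" using p by (subst prime_dvd_fact_iff[OF pr]) simp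
  moreover have "\<not> p dvd (fact (m+1) :: nat)" using p by (subst prime_dvd_fact_iff[OF pr]) simp
  ultimately show "prime p \<and> p dvd ((2*m+1) choose m)"
    using pr by (simp add: prime_dvd_mult_iff)
qed


definition Tsum :: "real \<Rightarrow> nat \<Rightarrow> real" where
  "Tsum lam n = (\<Sum>r\<in>{r. prime r \<and> r \<le> n}. ln (real r) / real r powr lam)"

lemma mid_ln:
  fixes m :: nat
  shows "(\<Sum>p\<in>{p. prime p \<and> m + 1 < p \<and> p \<le> 2*m+1}. ln (real p)) \<le> real (2*m+1) * ln 2"
proof -
  let ?M = "{p. prime p \<and> m + 1 < p \<and> p \<le> 2*m+1}"
  have fin: "finite ?M" by auto
  have pos: "\<And>p. p \<in> ?M \<Longrightarrow> 0 < real p" using prime_gt_0_nat by auto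
  have "(\<Sum>p\<in>?M. ln (real p)) = ln (\<Prod>p\<in>?M. real p)"
    using ln_prod[OF fin, of real] pos by fastforce
  also have "(\<Prod>p\<in>?M. real p) = real (\<Prod>?M)" by simp
  also have "\<Prod>?M \<le> (2*m+1) choose m"
    by (rule dvd_imp_le[OF mid_dvd]) simp
  then have "real (\<Prod>?M) \<le> real (2^(2*m+1))"
    using binomial_le_pow2[of "2*m+1" m] by linarith
  then have "ln (real (\<Prod>?M)) \<le> ln (real (2^(2*m+1)))"
    using pos prod_pos[of ?M real] by (subst ln_le_cancel_iff) auto
  also have "ln (real (2^(2*m+1))) = real (2*m+1) * ln 2"
    by (simp only: of_nat_power ln_realpow[of 2] of_nat_numeral)
  finally show ?thesis .
qed

lemma mid_weighted:
  fixes m :: nat and lam :: real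
  assumes "0 < lam"
  shows "(\<Sum>p\<in>{p. prime p \<and> m + 1 < p \<and> p \<le> 2*m+1}. ln (real p) / real p powr lam)
     \<le> 2 * ln 2 * real (m+1) powr (1 - lam)"
proof -
  let ?M = "{p. prime p \<and> m + 1 < p \<and> p \<le> 2*m+1}"
  have "(\<Sum>p\<in>?M. ln (real p) / real p powr lam) \<le> (\<Sum>p\<in>?M. ln (real p) / real (m+1) powr lam)"
  proof (rule sum_mono)
    fix p assume p: "p \<in> ?M"
    then have "real (m+1) powr lam \<le> real p powr lam"
      using assms by (intro powr_mono2) auto
    moreover have "0 \<le> ln (real p)" using p prime_gt_0_nat by auto
    moreover have "0 < real (m+1) powr lam" by simp
    moreover have "0 < real p" using p prime_gt_0_nat by auto
    ultimately show "ln (real p) / real p powr lam \<le> ln (real p) / real (m+1) powr lam"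
      by (intro divide_left_mono) (auto intro: mult_pos_pos)
  qed
  also have "\<dots> = (\<Sum>p\<in>?M. ln (real p)) / real (m+1) powr lam"
    by (simp add: sum_divide_distrib)
  also have "\<dots> \<le> real (2*m+1) * ln 2 / real (m+1) powr lam"
    by (intro divide_right_mono mid_ln) simp
  also have "\<dots> \<le> 2 * ln 2 * real (m+1) / real (m+1) powr lam"
    by (intro divide_right_mono) auto
  also have "\<dots> = 2 * ln 2 * real (m+1) powr (1 - lam)"
    by (simp add: powr_diff)
  finally show ?thesis .
qed


lemma Tsum_split:
  fixes m :: nat
  shows "Tsum lam (2*m+1) = Tsum lam (m+1) +
     (\<Sum>p\<in>{p. prime p \<and> m + 1 < p \<and> p \<le> 2*m+1}. ln (real p) / real p powr lam)"
proof -
  have "{r. prime r \<and> r \<le> 2*m+1} = {r. prime r \<and> r \<le> m+1} \<union> {p. prime p \<and> m + 1 < p \<and> p \<le> 2*m+1}"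
    by auto
  then show ?thesis unfolding Tsum_def
    by (simp only:) (rule sum.union_disjoint, auto)
qed

lemma cheb:
  fixes lam :: real
  assumes lam: "0 < lam" "lam < 1"
  shows "\<exists>c>0. \<forall>n\<ge>1. Tsum lam n \<le> c * real n powr (1 - lam)"
proof -
  define c where "c = max 1 (2 * ln 2 / ((3/2) powr (1-lam) - 1))"
  have g1: "(3/2::real) powr (1-lam) > 1" using lam powr_less_mono[of 0 "1-lam" "3/2::real"] by simp
  have c1: "c \<ge> 1" unfolding c_def by simp
  have c2: "c * ((3/2) powr (1-lam) - 1) \<ge> 2 * ln 2"
  proof -
    have "2 * ln 2 / ((3/2) powr (1-lam) - 1) \<le> c" unfolding c_def by simp
    then show ?thesis using g1 by (simp add: divide_le_eq)
  qed
  have main: "\<forall>n. n \<ge> 1 \<longrightarrow> Tsum lam n \<le> c * real n powr (1 - lam)"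
  proof (intro allI)
    fix n :: nat
    show "n \<ge> 1 \<longrightarrow> Tsum lam n \<le> c * real n powr (1 - lam)"
    proof (induction n rule: less_induct)
      case (less n)
      show ?case
      proof (intro impI)
        assume n1: "n \<ge> 1"
        consider "n = 1" | "n = 2" | "n \<ge> 3 \<and> even n" | "n \<ge> 3 \<and> odd n" using n1 by (cases "n \<ge> 3"; cases "even n"; cases "n = 1") auto
        then show "Tsum lam n \<le> c * real n powr (1 - lam)"
        proof cases
          case 1
          have e: "{r::nat. prime r \<and> r \<le> 1} = {}" by (auto dest: prime_ge_2_nat)
          show ?thesis using c1 unfolding Tsum_def 1 e by simp
        next
          case 2
          have e: "{r::nat. prime r \<and> r \<le> 2} = {2}" by (auto dest: prime_ge_2_nat)
          have "Tsum lam n = ln 2 / 2 powr lam" unfolding Tsum_def 2 e by simp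
          also have "\<dots> \<le> ln 2" using lam by (simp add: divide_le_eq ge_one_powr_ge_zero)
          also have "\<dots> \<le> 1 * 1" using ln_2_less_1 by simp
          also have "1 * 1 \<le> c * real n powr (1 - lam)"
            using 2 c1 lam ge_one_powr_ge_zero[of 2 "1-lam"] by (intro mult_mono) auto
          finally show ?thesis .
        next
          case 3
          obtain m where m0: "n = 2*m" using 3 by (auto elim: evenE)
          have m: "n = 2*m" "m \<ge> 2" using 3 m0 by linarith+
          have np: "\<not> prime n"
            using m prime_product[of 2 m] by auto
          have e: "prime r \<and> r \<le> n \<longleftrightarrow> prime r \<and> r \<le> n - 1" for r
            using np by (cases "r = n") auto
          have "Tsum lam n = Tsum lam (n-1)" unfolding Tsum_def e by simp
          also have "\<dots> \<le> c * real (n-1) powr (1 - lam)" using less.IH[of "n-1"] m by auto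
          also have "\<dots> \<le> c * real n powr (1 - lam)"
            using c1 lam by (intro mult_left_mono powr_mono2) auto
          finally show ?thesis .
        next
          case 4
          obtain m where m0: "n = 2*m+1" using 4 by (auto elim: oddE)
          have m: "n = 2*m+1" "m \<ge> 1" using 4 m0 by linarith+
          have s: "Tsum lam n = Tsum lam (m+1) +
            (\<Sum>p\<in>{p. prime p \<and> m + 1 < p \<and> p \<le> 2*m+1}. ln (real p) / real p powr lam)"
            using Tsum_split[of lam m] m by simp
          have ih: "Tsum lam (m+1) \<le> c * real (m+1) powr (1 - lam)"
            using less.IH[of "m+1"] m by simp
          have "Tsum lam n \<le> c * real (m+1) powr (1 - lam) + 2 * ln 2 * real (m+1) powr (1 - lam)"
            using s ih mid_weighted[OF lam(1), of m] by linarith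
          also have "\<dots> = (c + 2 * ln 2) * real (m+1) powr (1 - lam)"
            by (simp add: algebra_simps)
          also have "\<dots> \<le> c * (3/2) powr (1-lam) * real (m+1) powr (1 - lam)"
            using c2 by (intro mult_right_mono) (auto simp: right_diff_distrib)
          also have "\<dots> = c * ((3/2) * real (m+1)) powr (1 - lam)"
            using powr_mult[of "3/2" "real (m+1)" "1-lam"] by simp
          also have "\<dots> \<le> c * real n powr (1 - lam)"
            using c1 lam m by (intro mult_left_mono powr_mono2) auto
          finally show ?thesis .
        qed
      qed
    qed
  qed
  show ?thesis using main c1 by (intro exI[of _ c]) auto
qed


lemma jensen_powr:
  fixes k a :: "'i \<Rightarrow> real" and p :: real
  assumes "p \<ge> 1" "finite S" "\<And>i. i \<in> S \<Longrightarrow> k i \<ge> 0" "\<And>i. i \<in> S \<Longrightarrow> a i \<ge> 0"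
  shows "(\<Sum>i\<in>S. k i * a i) powr p \<le> (\<Sum>i\<in>S. k i) powr (p - 1) * (\<Sum>i\<in>S. k i * a i powr p)"
proof -
  define S' where "S' = {i\<in>S. k i > 0 \<and> a i > 0}"
  have fS': "finite S'" "S' \<subseteq> S" using assms(2) unfolding S'_def by auto
  have eq1: "(\<Sum>i\<in>S. k i * a i) = (\<Sum>i\<in>S'. k i * a i)"
  proof (rule sum.mono_neutral_right[OF assms(2) fS'(2)])
    show "\<forall>i\<in>S - S'. k i * a i = 0" using assms(3,4) unfolding S'_def by force
  qed
  have A0: "0 \<le> (\<Sum>i\<in>S. k i)" using assms(3) by (simp add: sum_nonneg)
  have R0: "0 \<le> (\<Sum>i\<in>S. k i * a i powr p)" using assms(3) by (simp add: sum_nonneg)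
  show ?thesis
  proof (cases "S' = {}")
    case True
    then show ?thesis using eq1 A0 R0 by simp
  next
    case False
    define A' where "A' = (\<Sum>i\<in>S'. k i)"
    have A'pos: "A' > 0" unfolding A'_def using False fS' by (intro sum_pos) (auto simp: S'_def)
    have A'le: "A' \<le> (\<Sum>i\<in>S. k i)" unfolding A'_def using assms(2,3) fS'(2)
      by (intro sum_mono2) auto
    have cv: "(\<Sum>i\<in>S'. (k i / A') *\<^sub>R a i) powr p \<le> (\<Sum>i\<in>S'. (k i / A') * a i powr p)"
    proof (rule convex_on_sum[OF fS'(1) False powr_convex[OF assms(1)]])
      show "(\<Sum>i\<in>S'. k i / A') = 1" using A'pos unfolding A'_def by (simp add: sum_divide_distrib[symmetric])
      show "\<And>i. i \<in> S' \<Longrightarrow> 0 \<le> k i / A'" using A'pos by (auto simp: S'_def)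
      show "\<And>i. i \<in> S' \<Longrightarrow> a i \<in> {0<..}" by (auto simp: S'_def)
    qed
    have "(\<Sum>i\<in>S'. k i * a i) = A' * (\<Sum>i\<in>S'. (k i / A') *\<^sub>R a i)"
      using A'pos by (simp add: sum_distrib_left)
    then have "(\<Sum>i\<in>S'. k i * a i) powr p = A' powr p * (\<Sum>i\<in>S'. (k i / A') *\<^sub>R a i) powr p"
      using A'pos fS' by (simp add: powr_mult sum_nonneg S'_def)
    also have "\<dots> \<le> A' powr p * (\<Sum>i\<in>S'. (k i / A') * a i powr p)"
      using cv A'pos by (intro mult_left_mono) auto
    also have "\<dots> = A' powr (p - 1) * (\<Sum>i\<in>S'. k i * a i powr p)"
      using A'pos by (simp add: sum_divide_distrib[symmetric] powr_diff)
    also have "\<dots> \<le> (\<Sum>i\<in>S. k i) powr (p - 1) * (\<Sum>i\<in>S. k i * a i powr p)"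
    proof (rule mult_mono)
      show "A' powr (p - 1) \<le> (\<Sum>i\<in>S. k i) powr (p - 1)"
        using A'le A'pos assms(1) by (intro powr_mono2) auto
      show "(\<Sum>i\<in>S'. k i * a i powr p) \<le> (\<Sum>i\<in>S. k i * a i powr p)"
        using assms(2,3) fS'(2) by (intro sum_mono2) auto
      show "0 \<le> (\<Sum>i\<in>S. k i) powr (p - 1)" by simp
      show "0 \<le> (\<Sum>i\<in>S'. k i * a i powr p)" using fS' by (intro sum_nonneg) (auto simp: S'_def)
    qed
    finally show ?thesis using eq1 by simp
  qed
qed


lemma J_pointwise:
  fixes f :: "int \<Rightarrow> real"
  shows "J_op lam N f x \<le> (\<Sum>r\<in>{r. prime r \<and> r \<le> N}. ln (real r) / real r powr lam * \<bar>f (x - int r)\<bar>)"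
proof -
  have "J_op lam N f x \<le> \<bar>J_op lam N f x\<bar>" by simp
  also have "\<dots> \<le> (\<Sum>r\<in>{r. prime r \<and> r \<le> N}. \<bar>f (x - int r) / (real r powr lam) * ln (real r)\<bar>)"
    unfolding J_op_def by (rule sum_abs)
  also have "\<dots> = (\<Sum>r\<in>{r. prime r \<and> r \<le> N}. ln (real r) / real r powr lam * \<bar>f (x - int r)\<bar>)"
  proof (rule sum.cong[OF refl])
    fix r assume "r \<in> {r. prime r \<and> r \<le> N}"
    then have "real r \<ge> 1" using prime_gt_0_nat by (auto simp: Suc_le_eq)
    then have "ln (real r) \<ge> 0" by simp
    then show "\<bar>f (x - int r) / (real r powr lam) * ln (real r)\<bar> = ln (real r) / real r powr lam * \<bar>f (x - int r)\<bar>"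
      by (simp add: abs_mult)
  qed
  finally show ?thesis .
qed

lemma weak_bound:
  fixes f :: "int \<Rightarrow> real" and p \<alpha> lam :: real and N :: nat
  assumes p: "p \<ge> 1" and f: "in_lp p f" and a: "\<alpha> > 0"
  shows "finite {x. J_op lam N f x > \<alpha>} \<and>
    real (card {x. J_op lam N f x > \<alpha>}) \<le> Tsum lam N powr p * (\<Sum>\<^sub>\<infinity>x. \<bar>f x\<bar> powr p) / \<alpha> powr p"
proof -
  define E where "E = {x. J_op lam N f x > \<alpha>}"
  define P where "P = {r::nat. prime r \<and> r \<le> N}"
  define k where "k r = ln (real r) / real r powr lam" for r :: nat
  define g where "g x = \<bar>f x\<bar> powr p" for x :: int
  define S where "S = (\<Sum>\<^sub>\<infinity>x. g x)"
  define B where "B = Tsum lam N powr p * S / \<alpha> powr p"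
  have finP: "finite P" unfolding P_def by auto
  have k0: "k r \<ge> 0" if "r \<in> P" for r
  proof -
    have "real r \<ge> 1" using that prime_gt_0_nat by (auto simp: P_def Suc_le_eq)
    then show ?thesis unfolding k_def by simp
  qed
  have gsum: "g summable_on UNIV" using f unfolding in_lp_def g_def by simp
  have g0: "g x \<ge> 0" for x unfolding g_def by simp
  have A: "Tsum lam N = (\<Sum>r\<in>P. k r)" unfolding Tsum_def P_def k_def by simp
  have A0: "(\<Sum>r\<in>P. k r) \<ge> 0" using k0 by (simp add: sum_nonneg)
  have pt: "\<alpha> powr p \<le> (\<Sum>r\<in>P. k r) powr (p - 1) * (\<Sum>r\<in>P. k r * g (x - int r))" if "x \<in> E" for x
  proof -
    have "\<alpha> < (\<Sum>r\<in>P. k r * \<bar>f (x - int r)\<bar>)"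
      using that J_pointwise[of lam N f x] unfolding E_def P_def k_def by simp
    then have "\<alpha> powr p \<le> (\<Sum>r\<in>P. k r * \<bar>f (x - int r)\<bar>) powr p"
      using a p by (intro powr_mono2) auto
    also have "\<dots> \<le> (\<Sum>r\<in>P. k r) powr (p - 1) * (\<Sum>r\<in>P. k r * \<bar>f (x - int r)\<bar> powr p)"
      by (rule jensen_powr[OF p finP]) (use k0 in auto)
    finally show ?thesis unfolding g_def .
  qed
  have shift: "(\<Sum>x\<in>F. g (x - int r)) \<le> S" if "finite F" for F r
  proof -
    have "(\<Sum>x\<in>F. g (x - int r)) = (\<Sum>y\<in>(\<lambda>x. x - int r) ` F. g y)"
      by (subst sum.reindex) (auto simp: inj_on_def)
    also have "\<dots> \<le> S" unfolding S_def
      by (rule finite_sum_le_infsum[OF gsum]) (use that g0 in auto)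
    finally show ?thesis .
  qed
  have cardF: "real (card F) \<le> B" if "finite F" "F \<subseteq> E" for F
  proof -
    have "real (card F) * \<alpha> powr p = (\<Sum>x\<in>F. \<alpha> powr p)" by simp
    also have "\<dots> \<le> (\<Sum>x\<in>F. (\<Sum>r\<in>P. k r) powr (p - 1) * (\<Sum>r\<in>P. k r * g (x - int r)))"
      using pt that by (intro sum_mono) auto
    also have "\<dots> = (\<Sum>r\<in>P. k r) powr (p - 1) * (\<Sum>r\<in>P. k r * (\<Sum>x\<in>F. g (x - int r)))"
      by (simp add: sum_distrib_left sum.swap[of _ F P])
    also have "\<dots> \<le> (\<Sum>r\<in>P. k r) powr (p - 1) * (\<Sum>r\<in>P. k r * S)"
      using k0 shift[OF that(1)] by (intro mult_left_mono sum_mono) auto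
    also have "\<dots> = (\<Sum>r\<in>P. k r) powr (p - 1) * (\<Sum>r\<in>P. k r) * S"
      by (simp add: sum_distrib_right)
    also have "(\<Sum>r\<in>P. k r) powr (p - 1) * (\<Sum>r\<in>P. k r) = (\<Sum>r\<in>P. k r) powr p"
    proof (cases "(\<Sum>r\<in>P. k r) = 0")
      case True then show ?thesis using p by simp
    next
      case False then show ?thesis using A0 by (simp add: powr_diff)
    qed
    finally have "real (card F) * \<alpha> powr p \<le> Tsum lam N powr p * S" using A by simp
    then show ?thesis unfolding B_def using a by (simp add: le_divide_eq)
  qed
  have finE: "finite E"
  proof (rule ccontr)
    assume "infinite E"
    then obtain F where F: "finite F" "card F = nat \<lceil>B\<rceil> + 1" "F \<subseteq> E"
      using infinite_arbitrarily_large by blast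
    have "real (card F) \<le> B" using cardF[OF F(1) F(3)] .
    moreover have "real (card F) > B" using F(2) real_nat_ceiling_ge[of B] by simp
    ultimately show False by simp
  qed
  show ?thesis using finE cardF[OF finE] unfolding E_def B_def S_def g_def by simp
qed


lemma Tsum_nonneg: "Tsum lam N \<ge> 0"
  unfolding Tsum_def
proof (intro sum_nonneg)
  fix r assume "r \<in> {r. prime r \<and> r \<le> N}"
  then have "real r \<ge> 1" using prime_gt_0_nat by (auto simp: Suc_le_eq)
  then show "0 \<le> ln (real r) / real r powr lam" by simp
qed

theorem mainTheorem5:
  fixes lam C p q :: real
  assumes "0 < lam" "lam < 1" "0 < C"
    and "1 < p" "p < 1 / (1 - lam)"
    and "1 / q = 1 / p - (1 - lam)"
  shows "\<exists>K. \<forall>(N::nat) (f::int \<Rightarrow> real) (\<alpha>::real).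
           N \<ge> 1 \<longrightarrow> in_lp p f \<longrightarrow>
           0 < \<alpha> \<longrightarrow> \<alpha> \<le> C * real N powr (- 1 / q) * lp_norm p f \<longrightarrow>
           finite {x. J_op lam N f x > \<alpha>} \<and>
           \<alpha> powr q * real (card {x. J_op lam N f x > \<alpha>}) \<le> K * lp_norm p f powr q"
proof -
  note lam = assms(1,2) and C = assms(3) and p1 = assms(4)
  have l1: "1 - lam > 0" using lam by simp
  have "p * (1 - lam) < 1" using assms(5) l1 by (simp add: less_divide_eq)
  then have ip: "1 / p > 1 - lam" using p1 by (simp add: less_divide_eq mult.commute)
  have q0: "1 / q > 0" using ip assms(6) by simp
  then have qpos: "q > 0" by (simp add: zero_less_divide_iff)
  have "1 / q < 1 / p" using assms(6) l1 by simp
  then have qp: "q > p" using qpos p1 by (simp add: divide_less_eq field_simps)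
  have expo: "(p - q) / q + (1 - lam) * p = 0"
  proof -
    have "1 - lam = 1 / p - 1 / q" using assms(6) by simp
    then show ?thesis using qpos p1 by (simp add: field_simps)
  qed
  obtain c where c: "c > 0" "\<And>n. n \<ge> 1 \<Longrightarrow> Tsum lam n \<le> c * real n powr (1 - lam)"
    using cheb[OF lam] by blast
  define K where "K = C powr (q - p) * c powr p"
  show ?thesis
  proof (intro exI[of _ K] allI impI)
    fix N :: nat and f :: "int \<Rightarrow> real" and \<alpha> :: real
    assume N: "N \<ge> 1" and f: "in_lp p f" and a: "0 < \<alpha>"
      and aX: "\<alpha> \<le> C * real N powr (- 1 / q) * lp_norm p f"
    define S where "S = (\<Sum>\<^sub>\<infinity>x. \<bar>f x\<bar> powr p)"
    define L where "L = lp_norm p f"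
    define T where "T = Tsum lam N"
    define X where "X = C * real N powr (- 1 / q) * L"
    have S0: "S \<ge> 0" unfolding S_def by (intro infsum_nonneg) simp
    have LS: "L = S powr (1 / p)" unfolding L_def S_def lp_norm_def by simp
    have LpS: "L powr p = S" using S0 p1 by (simp add: LS powr_powr)
    have L0: "L \<ge> 0" using LS by simp
    have Npos: "real N > 0" using N by simp
    have Lpos: "L > 0"
    proof (rule ccontr)
      assume "\<not> L > 0"
      then have "L = 0" using L0 by simp
      then show False using aX a unfolding L_def by simp
    qed
    have T0: "T \<ge> 0" unfolding T_def by (rule Tsum_nonneg)
    have wb: "finite {x. J_op lam N f x > \<alpha>}"
      "real (card {x. J_op lam N f x > \<alpha>}) \<le> T powr p * S / \<alpha> powr p"
      using weak_bound[of p f \<alpha> lam N] p1 f a unfolding T_def S_def by auto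
    have "\<alpha> powr q * real (card {x. J_op lam N f x > \<alpha>}) \<le> \<alpha> powr q * (T powr p * S / \<alpha> powr p)"
      using wb(2) by (intro mult_left_mono) auto
    also have "\<dots> = \<alpha> powr (q - p) * T powr p * S"
      using a by (simp add: powr_diff)
    also have "\<dots> \<le> X powr (q - p) * (c * real N powr (1 - lam)) powr p * S"
    proof (intro mult_right_mono mult_mono S0)
      show "\<alpha> powr (q - p) \<le> X powr (q - p)" using aX a qp unfolding X_def L_def
        by (intro powr_mono2) auto
      show "T powr p \<le> (c * real N powr (1 - lam)) powr p"
        using c(2)[OF N] T0 p1 unfolding T_def by (intro powr_mono2) auto
    qed auto
    also have "\<dots> = C powr (q - p) * c powr p * (real N powr ((p - q) / q) * real N powr ((1 - lam) * p))
                   * (L powr (q - p) * L powr p)"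
      unfolding X_def LpS[symmetric] using C c Npos Lpos
      by (simp add: powr_mult powr_powr) (metis minus_diff_eq minus_divide_left)
    also have "\<dots> = K * L powr q"
      unfolding K_def using Npos Lpos
      by (simp add: powr_add[symmetric] expo)
    finally show "finite {x. J_op lam N f x > \<alpha>} \<and>
           \<alpha> powr q * real (card {x. J_op lam N f x > \<alpha>}) \<le> K * lp_norm p f powr q"
      using wb(1) unfolding L_def by simp
  qed
qed

end
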